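(* Let $A,B$ be finite-dimensional quantum systems with $\dim\mathcal H_A,\dim\mathcal H_B\ge 2$, and let $\rho_A,\rho_B$ be density matrices on $A$ and $B$ respectively. Let $\mathcal S_{AB}$ be the set of separable density matrices on $\mathcal H_A\otimes\mathcal H_B$, and let $\partial\mathcal S_{AB}$ denote its boundary (relative to the real affine space of trace-one Hermitian operators on $\mathcal H_A\otimes\mathcal H_B$). Then $$\rho_A\otimes\rho_B\in\partial\mathcal S_{AB}\iff \det\rho_A\,\det\rho_B=0 .$$
   Context: A density matrix is a positive semidefinite operator of unit trace. A bipartite state is separable if it is a convex combination of product states $\sigma_A\otimes\sigma_B$. A point of a set $S$ is internal if some ball of nonzero radius centred at it (within the ambient affine space) is contained in $S$; the boundary $\partial S$ is the set of non-internal points of $S$. *)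

theory Defs
  imports "HOL-Analysis.Analysis"
begin

text \<open>Operators on the Hilbert space C^'n are matrices complex^'n^'n,
  with M $ i $ j the (i,j) entry. The bipartite space H_A (x) H_B is indexed
  by the product type 'a \<times> 'b.\<close>

type_synonym 'n cmat = "complex ^ 'n ^ 'n"

definition hermitian :: "'n::finite cmat \<Rightarrow> bool" where
  "hermitian M \<longleftrightarrow> (\<forall>i j. M $ i $ j = cnj (M $ j $ i))"

definition mtrace :: "'n::finite cmat \<Rightarrow> complex" where
  "mtrace M = (\<Sum>i\<in>UNIV. M $ i $ i)"

definition quad_form :: "'n::finite cmat \<Rightarrow> complex ^ 'n \<Rightarrow> complex" where
  "quad_form M v = (\<Sum>i\<in>UNIV. \<Sum>j\<in>UNIV. cnj (v $ i) * M $ i $ j * v $ j)"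

definition psd :: "'n::finite cmat \<Rightarrow> bool" where
  "psd M \<longleftrightarrow> hermitian M \<and> (\<forall>v. quad_form M v \<in> \<real> \<and> 0 \<le> Re (quad_form M v))"

definition density :: "'n::finite cmat \<Rightarrow> bool" where
  "density M \<longleftrightarrow> psd M \<and> mtrace M = 1"

definition kron :: "'a::finite cmat \<Rightarrow> 'b::finite cmat \<Rightarrow> ('a \<times> 'b) cmat" where
  "kron A B = (\<chi> p q. A $ fst p $ fst q * B $ snd p $ snd q)"

definition separable_states :: "(('a::finite) \<times> ('b::finite)) cmat set" where
  "separable_states = convex hull {kron sA sB | sA sB. density sA \<and> density sB}"

definition trace_one_herm :: "'n::finite cmat set" where
  "trace_one_herm = {X. hermitian X \<and> mtrace X = 1}"

definition internal_point :: "'n::finite cmat set \<Rightarrow> 'n cmat \<Rightarrow> bool" where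
  "internal_point S x \<longleftrightarrow> (\<exists>e>0. ball x e \<inter> trace_one_herm \<subseteq> S)"

definition aff_boundary :: "'n::finite cmat set \<Rightarrow> 'n cmat set" where
  "aff_boundary S = {x \<in> S. \<not> internal_point S x}"

end

theory Submission
  imports Defs
begin


lemma quad_form_alt: "quad_form M v = (\<Sum>i\<in>UNIV. cnj (v $ i) * (M *v v) $ i)"
  by (simp add: quad_form_def matrix_vector_mult_def sum_distrib_left mult.assoc)

lemma scaleR_entry: "(r *\<^sub>R M) $ i $ j = of_real r * (M $ i $ j :: complex)"
  by (metis vector_scaleR_component scaleR_conv_of_real)

lemma quad_form_add: "quad_form (M + N) v = quad_form M v + quad_form N v"
  unfolding quad_form_def by (simp add: distrib_left distrib_right sum.distrib)

lemma quad_form_diff: "quad_form (M - N) v = quad_form M v - quad_form N v"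
  unfolding quad_form_def by (simp add: left_diff_distrib right_diff_distrib sum_subtractf)

lemma quad_form_scaleR: "quad_form (r *\<^sub>R M) v = of_real r * quad_form M v"
  unfolding quad_form_def scaleR_entry by (simp add: sum_distrib_left mult_ac)

lemma quad_form_zero[simp]: "quad_form 0 v = 0"
  by (simp add: quad_form_def)
lemma mtrace_zero[simp]: "mtrace 0 = 0"
  by (simp add: mtrace_def)

lemma quad_form_sum: "finite I \<Longrightarrow> quad_form (\<Sum>k\<in>I. M k) v = (\<Sum>k\<in>I. quad_form (M k) v)"
  by (induction I rule: finite_induct) (auto simp: quad_form_add)

lemma mtrace_add: "mtrace (M + N) = mtrace M + mtrace N"
  by (simp add: mtrace_def sum.distrib)
lemma mtrace_diff: "mtrace (M - N) = mtrace M - mtrace N"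
  by (simp add: mtrace_def sum_subtractf)
lemma mtrace_scaleR: "mtrace (r *\<^sub>R M) = of_real r * mtrace M"
  unfolding mtrace_def scaleR_entry by (simp add: sum_distrib_left)
lemma mtrace_sum: "finite I \<Longrightarrow> mtrace (\<Sum>k\<in>I. M k) = (\<Sum>k\<in>I. mtrace (M k))"
  by (induction I rule: finite_induct) (auto simp: mtrace_add)

lemma hermitianD: "hermitian M \<Longrightarrow> M $ i $ j = cnj (M $ j $ i)"
  unfolding hermitian_def by blast

lemma hermitian_add: assumes "hermitian M" "hermitian N" shows "hermitian (M + N)"
  unfolding hermitian_def proof (intro allI)
  fix i j show "(M + N) $ i $ j = cnj ((M + N) $ j $ i)"
    using hermitianD[OF assms(1), of i j] hermitianD[OF assms(2), of i j] by simp
qed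
lemma hermitian_diff: assumes "hermitian M" "hermitian N" shows "hermitian (M - N)"
  unfolding hermitian_def proof (intro allI)
  fix i j show "(M - N) $ i $ j = cnj ((M - N) $ j $ i)"
    using hermitianD[OF assms(1), of i j] hermitianD[OF assms(2), of i j] by simp
qed
lemma hermitian_scaleR: assumes "hermitian M" shows "hermitian (r *\<^sub>R M)"
  unfolding hermitian_def proof (intro allI)
  fix i j show "(r *\<^sub>R M) $ i $ j = cnj ((r *\<^sub>R M) $ j $ i)"
    using hermitianD[OF assms(1), of i j] by (simp add: scaleR_entry)
qed
lemma hermitian_zero: "hermitian 0"
  unfolding hermitian_def by simp
lemma hermitian_sum: "finite I \<Longrightarrow> (\<And>k. k \<in> I \<Longrightarrow> hermitian (M k)) \<Longrightarrow> hermitian (\<Sum>k\<in>I. M k)"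
  by (induction I rule: finite_induct) (auto simp: hermitian_add hermitian_zero)

lemma hermitian_quad_real:
  assumes "hermitian M" shows "cnj (quad_form M v) = quad_form M v"
proof -
  have "cnj (quad_form M v) = (\<Sum>i\<in>UNIV. \<Sum>j\<in>UNIV. v $ i * cnj (M $ i $ j) * cnj (v $ j))"
    unfolding quad_form_def by (simp add: cnj_sum)
  also have "\<dots> = (\<Sum>i\<in>UNIV. \<Sum>j\<in>UNIV. v $ i * M $ j $ i * cnj (v $ j))"
    by (intro sum.cong refl) (metis assms hermitianD)
  also have "\<dots> = quad_form M v"
    unfolding quad_form_def by (subst sum.swap) (simp add: mult_ac)
  finally show ?thesis .
qed

lemma hermitian_quad_Reals: "hermitian M \<Longrightarrow> quad_form M v \<in> \<real>"
  using hermitian_quad_real Reals_cnj_iff by blast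

lemma sum_UNIV_prod: "(\<Sum>p\<in>(UNIV::('a::finite\<times>'b::finite) set). f p) = (\<Sum>a\<in>UNIV. \<Sum>b\<in>UNIV. f (a,b))"
  by (simp add: UNIV_Times_UNIV[symmetric] sum.cartesian_product del: UNIV_Times_UNIV)

lemma kron_add_left: "kron (A + A') B = kron A B + kron A' B"
  by (simp add: kron_def vec_eq_iff algebra_simps)
lemma kron_add_right: "kron A (B + B') = kron A B + kron A B'"
  by (simp add: kron_def vec_eq_iff algebra_simps)
lemma kron_diff_left: "kron (A - A') B = kron A B - kron A' B"
  by (simp add: kron_def vec_eq_iff algebra_simps)
lemma kron_diff_right: "kron A (B - B') = kron A B - kron A B'"
  by (simp add: kron_def vec_eq_iff algebra_simps)
lemma kron_scaleR_left: "kron (r *\<^sub>R A) B = r *\<^sub>R kron A B"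
  by (simp add: kron_def vec_eq_iff scaleR_entry)
lemma kron_scaleR_right: "kron A (r *\<^sub>R B) = r *\<^sub>R kron A B"
  by (simp add: kron_def vec_eq_iff scaleR_entry)

lemma mtrace_kron: "mtrace (kron A B) = mtrace A * mtrace B"
  unfolding mtrace_def kron_def sum_UNIV_prod sum_product by simp

lemma hermitian_kron: assumes "hermitian A" "hermitian B" shows "hermitian (kron A B)"
  unfolding hermitian_def proof (intro allI)
  fix p q show "kron A B $ p $ q = cnj (kron A B $ q $ p)"
    using hermitianD[OF assms(1), of "fst p" "fst q"] hermitianD[OF assms(2), of "snd p" "snd q"] by (simp add: kron_def)
qed

definition pv :: "complex^'a \<Rightarrow> complex^'b \<Rightarrow> complex^('a\<times>'b)" where
  "pv v w = (\<chi> p. v $ fst p * w $ snd p)"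

lemma quad_form_kron_pv:
  fixes A :: "'a::finite cmat" and B :: "'b::finite cmat"
  shows "quad_form (kron A B) (pv v w) = quad_form A v * quad_form B w"
proof -
  have "quad_form (kron A B) (pv v w) =
     (\<Sum>a\<in>UNIV. \<Sum>b\<in>UNIV. \<Sum>a'\<in>UNIV. \<Sum>b'\<in>UNIV.
        (cnj (v$a) * A$a$a' * v$a') * (cnj (w$b) * B$b$b' * w$b'))"
    unfolding quad_form_def sum_UNIV_prod
    by (intro sum.cong refl) (simp add: kron_def pv_def mult_ac)
  also have "\<dots> = quad_form A v * quad_form B w"
    unfolding quad_form_def sum_product by simp
  finally show ?thesis .
qed



lemma density_quad: "density M \<Longrightarrow> quad_form M v \<in> \<real> \<and> 0 \<le> Re (quad_form M v)"
  unfolding density_def psd_def by blast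

lemma separable_quad_nonneg:
  assumes "Y \<in> (separable_states :: ('a::finite \<times> 'b::finite) cmat set)"
  shows "0 \<le> Re (quad_form Y (pv v w))"
proof -
  let ?C = "{Y :: ('a \<times> 'b) cmat. 0 \<le> Re (quad_form Y (pv v w))}"
  have cvx: "convex ?C"
    unfolding convex_def by (auto simp: quad_form_add quad_form_scaleR)
  have sub: "{kron sA sB | sA sB. density sA \<and> density sB} \<subseteq> ?C"
  proof clarify
    fix sA :: "'a cmat" and sB :: "'b cmat" assume d: "density sA" "density sB"
    obtain x where x: "quad_form sA v = of_real x" "0 \<le> x"
      using density_quad[OF d(1), of v] by (metis Reals_cases Re_complex_of_real)
    obtain y where y: "quad_form sB w = of_real y" "0 \<le> y"
      using density_quad[OF d(2), of w] by (metis Reals_cases Re_complex_of_real)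
    show "0 \<le> Re (quad_form (kron sA sB) (pv v w))"
      unfolding quad_form_kron_pv x y using x(2) y(2)
      by (simp del: of_real_mult add: of_real_mult[symmetric])
  qed
  have "separable_states \<subseteq> ?C"
    unfolding separable_states_def by (rule hull_minimal[where S=convex, OF sub cvx])
  then show ?thesis using assms by blast
qed

lemma det_zero_kernel:
  fixes M :: "'n::finite cmat"
  assumes "det M = 0" shows "\<exists>v. v \<noteq> 0 \<and> M *v v = 0"
  using assms invertible_det_nz[of M] invertible_left_inverse[of M] matrix_left_invertible_ker[of M]
  by blast

lemma quad_form_ker: "M *v v = 0 \<Longrightarrow> quad_form M v = 0"
  unfolding quad_form_alt by simp

lemma pv_nonzero:
  assumes "v \<noteq> 0" "w \<noteq> 0" shows "pv v w \<noteq> 0"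
proof -
  obtain a where "v $ a \<noteq> 0" using assms(1) by (metis vec_eq_iff zero_index)
  moreover obtain b where "w $ b \<noteq> 0" using assms(2) by (metis vec_eq_iff zero_index)
  ultimately have "pv v w $ (a, b) \<noteq> 0" by (simp add: pv_def)
  then show ?thesis by auto
qed



lemma cnj_mult_self: "cnj z * z = of_real ((cmod z)^2)"
  by (metis complex_norm_square mult.commute of_real_power)

lemma not_internal_aux:
  fixes rho :: "'n::finite cmat"
  assumes N2: "CARD('n) \<ge> 2" and u0: "u \<noteq> 0" and q0: "quad_form rho u = 0"
    and rt: "rho \<in> trace_one_herm"
    and sepq: "\<And>Y. Y \<in> S \<Longrightarrow> 0 \<le> Re (quad_form Y u)"
  shows "\<not> internal_point S rho"
proof
  assume "internal_point S rho"
  then obtain e where e: "e > 0" "ball rho e \<inter> trace_one_herm \<subseteq> S"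
    unfolding internal_point_def by blast
  define s where "s = (\<Sum>p\<in>UNIV. (cmod (u$p))^2)"
  define N where "N = real CARD('n)"
  have N: "N \<ge> 2" using N2 unfolding N_def by simp
  obtain p0 where p0: "u $ p0 \<noteq> 0" using u0 by (metis vec_eq_iff zero_index)
  have "0 < (cmod (u$p0))^2" using p0 by simp
  also have "\<dots> \<le> s" unfolding s_def
    by (rule member_le_sum) auto
  finally have s: "s > 0" .
  have ssum: "(\<Sum>p\<in>UNIV. cnj (u$p) * u$p) = of_real s"
    unfolding s_def cnj_mult_self by simp
  define P :: "'n cmat" where "P = (\<chi> p q. u$p * cnj (u$q))"
  define I :: "'n cmat" where "I = mat 1"
  define D where "D = (1/N) *\<^sub>R I - (1/s) *\<^sub>R P"
  have hI: "hermitian I" unfolding hermitian_def I_def by (simp add: mat_def)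
  have hP: "hermitian P" unfolding hermitian_def P_def by (simp add: mult.commute)
  have hD: "hermitian D" unfolding D_def by (intro hermitian_diff hermitian_scaleR hI hP)
  have tI: "mtrace I = of_real N" unfolding mtrace_def I_def N_def by (simp add: mat_def)
  have tP: "mtrace P = of_real s" unfolding mtrace_def P_def using ssum by (simp add: mult.commute)
  have tD: "mtrace D = 0" unfolding D_def using N s
    by (simp add: mtrace_diff mtrace_scaleR tI tP)
  have qI: "quad_form I u = of_real s"
    unfolding quad_form_def I_def using ssum by (simp add: mat_def if_distrib if_distribR sum.delta cong: if_cong)
  have qP: "quad_form P u = of_real (s^2)"
  proof -
    have "quad_form P u = (\<Sum>i\<in>UNIV. cnj (u$i) * u$i) * (\<Sum>j\<in>UNIV. cnj (u$j) * u$j)"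
      unfolding quad_form_def P_def sum_product by (simp add: mult_ac)
    then show ?thesis using ssum by (simp add: power2_eq_square)
  qed
  have qD: "quad_form D u = of_real (s/N - s)"
    unfolding D_def using s by (simp add: quad_form_diff quad_form_scaleR qI qP power2_eq_square)
  define t where "t = e / (2 * (norm D + 1))"
  have pos2: "0 < 2 * (norm D + 1)" by (smt (verit) norm_ge_zero)
  then have t: "t > 0" unfolding t_def using e by (intro divide_pos_pos)
  have "t * norm D < e"
  proof -
    have "t * norm D \<le> t * (norm D + 1)" using t by simp
    also have "\<dots> = e/2" unfolding t_def using pos2 by (simp add: field_simps)
    finally show ?thesis using e by simp
  qed
  define X where "X = rho + t *\<^sub>R D"
  have "dist rho X < e" unfolding X_def dist_norm using \<open>t * norm D < e\<close> t by simp
  moreover have "X \<in> trace_one_herm"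
    using rt unfolding X_def trace_one_herm_def
    by (auto intro!: hermitian_add hermitian_scaleR hD simp: mtrace_add mtrace_scaleR tD)
  ultimately have "X \<in> S" using e(2) by auto
  then have "0 \<le> Re (quad_form X u)" by (rule sepq)
  moreover have "Re (quad_form X u) = t * (s/N - s)"
    unfolding X_def by (simp add: quad_form_add quad_form_scaleR q0 qD)
  moreover have sN: "s/N < s" using s N by (simp add: divide_less_eq)
  moreover have "t * (s/N - s) < 0" using t sN by (intro mult_pos_neg) simp_all
  ultimately show False by linarith
qed



definition bil :: "'n::finite cmat \<Rightarrow> complex^'n \<Rightarrow> complex^'n \<Rightarrow> complex" where
  "bil M x y = (\<Sum>i\<in>UNIV. \<Sum>j\<in>UNIV. cnj (x$i) * M$i$j * y$j)"

lemma quad_bil: "quad_form M x = bil M x x"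
  by (simp add: quad_form_def bil_def)

lemma bil_add_left: "bil M (x + y) z = bil M x z + bil M y z"
  unfolding bil_def by (simp add: distrib_left distrib_right sum.distrib)
lemma bil_add_right: "bil M x (y + z) = bil M x y + bil M x z"
  unfolding bil_def by (simp add: distrib_left distrib_right sum.distrib)
lemma vec_scaleR_nth: "(t *\<^sub>R x) $ i = of_real t * (x $ i :: complex)"
  by (metis vector_scaleR_component scaleR_conv_of_real)
lemma bil_scale_left: "bil M (t *\<^sub>R x) y = of_real t * bil M x y"
  unfolding bil_def vec_scaleR_nth by (simp add: sum_distrib_left mult_ac)
lemma bil_scale_right: "bil M x (t *\<^sub>R y) = of_real t * bil M x y"
  unfolding bil_def vec_scaleR_nth by (simp add: sum_distrib_left mult_ac)

lemma bil_herm: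
  assumes "hermitian M" shows "bil M x y = cnj (bil M y x)"
proof -
  have "cnj (bil M y x) = (\<Sum>i\<in>UNIV. \<Sum>j\<in>UNIV. y $ i * cnj (M $ i $ j) * cnj (x $ j))"
    unfolding bil_def by (simp add: cnj_sum)
  also have "\<dots> = (\<Sum>i\<in>UNIV. \<Sum>j\<in>UNIV. y $ i * M $ j $ i * cnj (x $ j))"
    by (intro sum.cong refl) (metis assms hermitianD)
  also have "\<dots> = bil M x y"
    unfolding bil_def by (subst sum.swap) (simp add: mult_ac)
  finally show ?thesis by simp
qed

lemma bil_image: "bil M (M *v v) v = (\<Sum>i\<in>UNIV. cnj ((M *v v)$i) * (M *v v)$i)"
  unfolding bil_def
proof (intro sum.cong refl)
  fix i
  show "(\<Sum>j\<in>UNIV. cnj ((M *v v) $ i) * M $ i $ j * v $ j) = cnj ((M *v v) $ i) * (M *v v) $ i"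
    by (subst (2) matrix_vector_mult_def) (simp add: sum_distrib_left mult.assoc)
qed

lemma psd_quad_zero_ker:
  assumes "psd M" "quad_form M v = 0"
  shows "M *v v = 0"
proof (rule ccontr)
  assume ne: "M *v v \<noteq> 0"
  define w where "w = M *v v"
  define r where "r = (\<Sum>i\<in>UNIV. (cmod (w$i))^2)"
  obtain i0 where i0: "w $ i0 \<noteq> 0" using ne unfolding w_def by (metis vec_eq_iff zero_index)
  have "0 < (cmod (w$i0))^2" using i0 by simp
  also have "\<dots> \<le> r" unfolding r_def by (rule member_le_sum) auto
  finally have r: "r > 0" .
  have herm: "hermitian M" using assms(1) unfolding psd_def by blast
  have b1: "bil M w v = of_real r"
    unfolding w_def bil_image r_def cnj_mult_self by simp
  have b2: "bil M v w = of_real r" using bil_herm[OF herm, of v w] b1 by simp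
  define Q where "Q = Re (quad_form M w)"
  have Q: "Q \<ge> 0" using assms(1) unfolding psd_def Q_def by blast
  define t where "t = - r / (Q + 1)"
  have "quad_form M (v + t *\<^sub>R w) = quad_form M v + of_real t * bil M v w + of_real t * bil M w v + of_real t * of_real t * quad_form M w"
    unfolding quad_bil by (simp add: bil_add_left bil_add_right bil_scale_left bil_scale_right algebra_simps)
  then have "Re (quad_form M (v + t *\<^sub>R w)) = 2 * t * r + t * t * Q"
    using assms(2) b1 b2 unfolding Q_def by simp
  also have "\<dots> < 0"
  proof -
    have Q1: "Q + 1 > 0" using Q by simp
    have tneg: "t < 0" unfolding t_def using r Q1 by (simp add: divide_pos_pos)
    have h: "t * (Q + 1) = - r" unfolding t_def using Q1 by simp
    then have h2: "t * t * Q = t * (- r - t)" by (simp add: algebra_simps) (metis mult.assoc h distrib_left mult.commute add.commute diff_minus_eq_add minus_add_distrib eq_neg_iff_add_eq_0 add_diff_cancel)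
    have "2 * t * r + t * t * Q = t * (r - t)" using h2 by (simp add: algebra_simps)
    moreover have "t * (r - t) < 0" using tneg r by (intro mult_neg_pos) auto
    ultimately show ?thesis by simp
  qed
  finally show False using assms(1) unfolding psd_def by (meson not_le)
qed

lemma quad_form_scaleR_vec: "quad_form M (c *\<^sub>R x) = of_real (c^2) * quad_form M x"
  unfolding quad_bil by (simp add: bil_scale_left bil_scale_right power2_eq_square)

lemma pos_def_bound:
  fixes M :: "'n::finite cmat"
  assumes "psd M" "det M \<noteq> 0"
  shows "\<exists>l>0. \<forall>v. l * (norm v)^2 \<le> Re (quad_form M v)"
proof -
  have pos: "Re (quad_form M v) > 0" if "v \<noteq> 0" for v
  proof -
    have "Re (quad_form M v) \<ge> 0" using assms(1) unfolding psd_def by blast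
    moreover have "quad_form M v \<noteq> 0"
    proof
      assume "quad_form M v = 0"
      then have "M *v v = 0" by (rule psd_quad_zero_ker[OF assms(1)])
      then show False using that assms(2) invertible_det_nz[of M] invertible_left_inverse[of M]
          matrix_left_invertible_ker[of M] by blast
    qed
    moreover have "quad_form M v \<in> \<real>" using assms(1) unfolding psd_def by blast
    ultimately show ?thesis by (metis Reals_cases Re_complex_of_real less_eq_real_def of_real_0)
  qed
  have cont: "continuous_on (sphere 0 1) (\<lambda>v::complex^'n. Re (quad_form M v))"
    unfolding quad_form_def by (intro continuous_intros)
  obtain x where x: "x \<in> sphere 0 1" "\<forall>y\<in>sphere 0 1. Re (quad_form M x) \<le> Re (quad_form M y)"
    using continuous_attains_inf[OF compact_sphere _ cont] by (auto simp: sphere_eq_empty)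
  define l where "l = Re (quad_form M x)"
  have l: "l > 0" unfolding l_def using x(1) by (intro pos) auto
  have "l * (norm v)^2 \<le> Re (quad_form M v)" for v
  proof (cases "v = 0")
    case True then show ?thesis by (simp add: quad_form_def)
  next
    case False
    define y where "y = (1 / norm v) *\<^sub>R v"
    have y: "y \<in> sphere 0 1" unfolding y_def using False by simp
    have v: "v = norm v *\<^sub>R y" unfolding y_def using False by simp
    have "Re (quad_form M v) = (norm v)^2 * Re (quad_form M y)"
      by (subst v, simp add: quad_form_scaleR_vec)
    moreover have "l \<le> Re (quad_form M y)" using x(2) y unfolding l_def by blast
    ultimately show ?thesis by (simp add: mult_right_mono mult.commute)
  qed
  then show ?thesis using l by blast
qed



lemma quad_form_bound:
  "cmod (quad_form H v) \<le> (\<Sum>i\<in>UNIV. \<Sum>j\<in>UNIV. cmod (H$i$j)) * (norm v)^2"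
proof -
  have "cmod (quad_form H v) \<le> (\<Sum>i\<in>UNIV. \<Sum>j\<in>UNIV. cmod (cnj (v $ i) * H $ i $ j * v $ j))"
    unfolding quad_form_def by (rule order_trans[OF norm_sum sum_mono]) (rule norm_sum)
  also have "\<dots> \<le> (\<Sum>i\<in>UNIV. \<Sum>j\<in>UNIV. cmod (H$i$j) * (norm v)^2)"
  proof (intro sum_mono)
    fix i j
    have "cmod (cnj (v $ i) * H $ i $ j * v $ j) = cmod (H$i$j) * (cmod (v$i) * cmod (v$j))"
      by (simp add: norm_mult)
    also have "\<dots> \<le> cmod (H$i$j) * (norm v * norm v)"
      by (intro mult_left_mono mult_mono Finite_Cartesian_Product.norm_nth_le) auto
    finally show "cmod (cnj (v $ i) * H $ i $ j * v $ j) \<le> cmod (H$i$j) * (norm v)^2"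
      by (simp add: power2_eq_square)
  qed
  also have "\<dots> = (\<Sum>i\<in>UNIV. \<Sum>j\<in>UNIV. cmod (H$i$j)) * (norm v)^2"
    by (simp add: sum_distrib_right)
  finally show ?thesis .
qed

definition pdl :: "'n::finite cmat \<Rightarrow> real \<Rightarrow> bool" where
  "pdl M l \<longleftrightarrow> hermitian M \<and> (\<forall>v. l * (norm v)^2 \<le> Re (quad_form M v))"

lemma pdl_psd: assumes "pdl M l" "l \<ge> 0" shows "psd M"
  unfolding psd_def
proof (intro conjI allI)
  show h: "hermitian M" using assms unfolding pdl_def by blast
  fix v
  show "quad_form M v \<in> \<real>" by (rule hermitian_quad_Reals[OF h])
  have "0 \<le> l * (norm v)^2" using assms(2) by simp
  also have "\<dots> \<le> Re (quad_form M v)" using assms(1) unfolding pdl_def by blast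
  finally show "0 \<le> Re (quad_form M v)" .
qed

lemma mult_ind: "(x::complex) * (if P then 1 else 0) = (if P then x else 0)" by simp

lemma quad_form_axis: "quad_form M (axis i 1) = M $ i $ i"
proof -
  have "quad_form M (axis i 1) = (\<Sum>a\<in>UNIV. \<Sum>b\<in>UNIV. cnj (if a = i then 1 else 0) * M $ a $ b * (if b = i then 1 else 0))"
    unfolding quad_form_def axis_def by simp
  also have "\<dots> = (\<Sum>a\<in>UNIV. if a = i then (\<Sum>b\<in>UNIV. if b = i then M $ a $ b else 0) else 0)"
    by (intro sum.cong refl) (auto simp: mult_ind)
  also have "\<dots> = M $ i $ i" by simp
  finally show ?thesis .
qed

lemma norm_axis_c: "norm (axis i (1::complex)) = 1"
  by (simp add: norm_eq_1 inner_axis')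

lemma pdl_trace:
  fixes M :: "'n::finite cmat"
  assumes "pdl M l" "l > 0"
  shows "mtrace M = of_real (Re (mtrace M)) \<and> Re (mtrace M) > 0"
proof -
  have h: "hermitian M" using assms unfolding pdl_def by blast
  have "M $ i $ i \<in> \<real>" for i
    using hermitian_quad_Reals[OF h, of "axis i 1"] unfolding quad_form_axis .
  then have real: "mtrace M \<in> \<real>"
    unfolding mtrace_def by (intro sum_in_Reals)
  have le: "l \<le> Re (M $ i $ i)" for i
  proof -
    have "l * (norm (axis i (1::complex)))^2 \<le> Re (quad_form M (axis i 1))"
      using assms(1) unfolding pdl_def by blast
    then show ?thesis by (simp add: quad_form_axis norm_axis_c)
  qed
  have "(\<Sum>i\<in>(UNIV::'n set). l) \<le> (\<Sum>i\<in>UNIV. Re (M $ i $ i))"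
    by (rule sum_mono) (rule le)
  also have "\<dots> = Re (mtrace M)" unfolding mtrace_def by (simp add: Re_sum)
  finally have ge: "(\<Sum>i\<in>(UNIV::'n set). l) \<le> Re (mtrace M)" .
  have "(\<Sum>i\<in>(UNIV::'n set). l) > 0" using assms(2) by simp
  with ge have "Re (mtrace M) > 0" by linarith
  moreover have "mtrace M = of_real (Re (mtrace M))" using real by (simp add: of_real_Re)
  ultimately show ?thesis by blast
qed

lemma pdl_perturb:
  assumes "pdl M l" "hermitian H" "\<And>v. cmod (quad_form H v) \<le> C * (norm v)^2"
    and "\<bar>a\<bar> * C \<le> l / 2"
  shows "pdl (M + a *\<^sub>R H) (l/2)"
  unfolding pdl_def
proof (intro conjI allI)
  show "hermitian (M + a *\<^sub>R H)" using assms unfolding pdl_def by (intro hermitian_add hermitian_scaleR) auto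
  fix v
  have "\<bar>a * Re (quad_form H v)\<bar> \<le> \<bar>a\<bar> * (C * (norm v)^2)"
    by (simp add: abs_mult) (intro mult_left_mono order_trans[OF abs_Re_le_cmod assms(3)]; simp)
  also have "\<dots> \<le> (l/2) * (norm v)^2"
  proof -
    have "\<bar>a\<bar> * C * (norm v)^2 \<le> l/2 * (norm v)^2" by (rule mult_right_mono[OF assms(4)]) simp
    then show ?thesis by (simp add: mult.assoc)
  qed
  finally have "\<bar>a * Re (quad_form H v)\<bar> \<le> (l/2) * (norm v)^2" .
  moreover have "l * (norm v)^2 \<le> Re (quad_form M v)" using assms(1) unfolding pdl_def by blast
  ultimately show "l / 2 * (norm v)\<^sup>2 \<le> Re (quad_form (M + a *\<^sub>R H) v)"
    by (simp add: quad_form_add quad_form_scaleR)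
qed



definition hu :: "'a::finite \<Rightarrow> 'a \<Rightarrow> bool \<Rightarrow> 'a cmat" where
  "hu a a' s = (\<chi> x y. if s then \<i> * (of_bool (x = a \<and> y = a') - of_bool (x = a' \<and> y = a))
                 else of_bool (x = a \<and> y = a') + of_bool (x = a' \<and> y = a))"

definition gam :: "bool \<Rightarrow> complex" where
  "gam s = (if s then - \<i> else 1)"

lemma cnj_of_bool: "cnj (of_bool P) = of_bool P"
  by (cases P) simp_all

lemma norm_of_bool: "cmod (of_bool P) \<le> 1"
  by (cases P) simp_all

lemma hu_herm: "hermitian (hu a a' s)"
  unfolding hermitian_def
proof (intro allI)
  fix x y
  have c1: "(x = a \<and> y = a') = (y = a' \<and> x = a)" "(x = a' \<and> y = a) = (y = a \<and> x = a')" by auto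
  show "hu a a' s $ x $ y = cnj (hu a a' s $ y $ x)"
  proof (cases s)
    case True
    then show ?thesis unfolding hu_def by (simp add: cnj_of_bool c1 algebra_simps)
  next
    case False
    then show ?thesis unfolding hu_def by (simp add: cnj_of_bool c1 add.commute)
  qed
qed

lemma hu_T: "hu a a' True $ x $ y = \<i> * (of_bool (x = a \<and> y = a') - of_bool (x = a' \<and> y = a))"
  unfolding hu_def by (simp only: vec_lambda_beta if_True)
lemma hu_F: "hu a a' False $ x $ y = of_bool (x = a \<and> y = a') + of_bool (x = a' \<and> y = a)"
  unfolding hu_def by (simp only: vec_lambda_beta if_False)
lemma b1: "cmod (of_bool P - (of_bool Q::complex)) \<le> 2" by (cases P; cases Q) simp_all
lemma b2: "cmod (of_bool P + (of_bool Q::complex)) \<le> 2" by (cases P; cases Q) simp_all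

lemma hu_bound: "cmod (hu a a' s $ x $ y) \<le> 2"
  by (cases s) (simp_all only: hu_T hu_F norm_mult norm_ii mult_1_left b1 b2)


lemma hu_sum: "(\<Sum>s\<in>UNIV. gam s * hu a a' s $ x $ y) = 2 * of_bool (x = a \<and> y = a')"
proof -
  have "(\<Sum>s\<in>UNIV. gam s * hu a a' s $ x $ y) = gam True * hu a a' True $ x $ y + gam False * hu a a' False $ x $ y"
    unfolding UNIV_bool by simp
  also have "\<dots> = 2 * of_bool (x = a \<and> y = a')"
    unfolding hu_def gam_def by (simp add: algebra_simps)
  finally show ?thesis .
qed

lemma gam_norm: "cmod (gam s) = 1"
  unfolding gam_def by auto

lemma kron_entry: "kron A B $ x $ y = A $ fst x $ fst y * B $ snd x $ snd y"
  unfolding kron_def by simp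

lemma sum_matrix_entry: "(\<Sum>k\<in>I. r k *\<^sub>R M k) $ x $ y = (\<Sum>k\<in>I. of_real (r k) * (M k $ x $ y :: complex))"
  apply simp
  apply (simp add: scaleR_conv_of_real)
  done

lemma sum_prod_factor:
  fixes g :: "'x::finite \<Rightarrow> complex" and h :: "'y::finite \<Rightarrow> complex"
  shows "(\<Sum>st\<in>UNIV. (c::complex) * (g (fst st) * h (snd st))) = c * ((\<Sum>s\<in>UNIV. g s) * (\<Sum>t\<in>UNIV. h t))"
proof -
  have "(\<Sum>st\<in>UNIV. c * (g (fst st) * h (snd st))) = c * (\<Sum>st\<in>UNIV. g (fst st) * h (snd st))"
    by (simp add: sum_distrib_left)
  also have "(\<Sum>st\<in>UNIV. g (fst st) * h (snd st)) = (\<Sum>s\<in>UNIV. g s) * (\<Sum>t\<in>UNIV. h t)"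
    unfolding sum_UNIV_prod sum_product by simp
  finally show ?thesis .
qed

definition cidx :: "('a::finite \<times> 'b::finite) cmat \<Rightarrow> (('a \<times> 'b) \<times> ('a \<times> 'b)) \<times> (bool \<times> bool) \<Rightarrow> complex" where
  "cidx D idx = D $ fst (fst idx) $ snd (fst idx) * gam (fst (snd idx)) * gam (snd (snd idx)) / 4"

definition Kidx :: "(('a::finite \<times> 'b::finite) \<times> ('a \<times> 'b)) \<times> (bool \<times> bool) \<Rightarrow> ('a \<times> 'b) cmat" where
  "Kidx idx = kron (hu (fst (fst (fst idx))) (fst (snd (fst idx))) (fst (snd idx)))
                   (hu (snd (fst (fst idx))) (snd (snd (fst idx))) (snd (snd idx)))"

lemma Kidx_herm: "hermitian (Kidx idx)"
  unfolding Kidx_def by (intro hermitian_kron hu_herm)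

lemma decomp_complex:
  fixes D :: "('a::finite \<times> 'b::finite) cmat"
  shows "D $ x $ y = (\<Sum>idx\<in>UNIV. cidx D idx * Kidx idx $ x $ y)"
proof -
  have "(\<Sum>idx\<in>UNIV. cidx D idx * Kidx idx $ x $ y) =
    (\<Sum>pq\<in>UNIV. \<Sum>st\<in>UNIV. D $ fst pq $ snd pq / 4 *
       ((gam (fst st) * hu (fst (fst pq)) (fst (snd pq)) (fst st) $ fst x $ fst y) *
        (gam (snd st) * hu (snd (fst pq)) (snd (snd pq)) (snd st) $ snd x $ snd y)))"
    unfolding sum_UNIV_prod[of "\<lambda>idx. cidx D idx * Kidx idx $ x $ y"]
    by (intro sum.cong refl) (simp add: cidx_def Kidx_def kron_entry mult_ac)
  also have "\<dots> = (\<Sum>pq\<in>UNIV. D $ fst pq $ snd pq / 4 *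
       ((\<Sum>s\<in>UNIV. gam s * hu (fst (fst pq)) (fst (snd pq)) s $ fst x $ fst y) *
        (\<Sum>t\<in>UNIV. gam t * hu (snd (fst pq)) (snd (snd pq)) t $ snd x $ snd y)))"
    by (intro sum.cong refl) (rule sum_prod_factor)
  also have "\<dots> = (\<Sum>pq\<in>UNIV. if pq = (x, y) then D $ x $ y else 0)"
    unfolding hu_sum by (intro sum.cong refl) (auto simp: prod_eq_iff)
  also have "\<dots> = D $ x $ y" by simp
  finally show ?thesis by simp
qed



lemma herm_decomp:
  fixes D :: "('a::finite \<times> 'b::finite) cmat"
  assumes h: "hermitian D"
  shows "D = (\<Sum>idx\<in>UNIV. Re (cidx D idx) *\<^sub>R Kidx idx)"
proof (subst vec_eq_iff, intro allI, subst vec_eq_iff, intro allI)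
  fix x y
  have e1: "D $ x $ y = (\<Sum>idx\<in>UNIV. cidx D idx * Kidx idx $ x $ y)" by (rule decomp_complex)
  have "D $ x $ y = cnj (D $ y $ x)" by (rule hermitianD[OF h])
  also have "\<dots> = (\<Sum>idx\<in>UNIV. cnj (cidx D idx) * cnj (Kidx idx $ y $ x))"
    by (subst decomp_complex) (simp add: cnj_sum)
  also have "\<dots> = (\<Sum>idx\<in>UNIV. cnj (cidx D idx) * Kidx idx $ x $ y)"
    by (intro sum.cong refl) (metis hermitianD Kidx_herm)
  finally have e2: "D $ x $ y = (\<Sum>idx\<in>UNIV. cnj (cidx D idx) * Kidx idx $ x $ y)" .
  have "2 * D $ x $ y = (\<Sum>idx\<in>UNIV. (cidx D idx + cnj (cidx D idx)) * Kidx idx $ x $ y)"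
    using e1 e2 by (simp add: distrib_right sum.distrib)
  also have "\<dots> = (\<Sum>idx\<in>UNIV. 2 * (of_real (Re (cidx D idx)) * Kidx idx $ x $ y))"
    by (intro sum.cong refl) (simp add: complex_add_cnj)
  finally have "D $ x $ y = (\<Sum>idx\<in>UNIV. of_real (Re (cidx D idx)) * Kidx idx $ x $ y)"
    by (simp add: sum_distrib_left[symmetric])
  then show "D $ x $ y = (\<Sum>idx\<in>UNIV. Re (cidx D idx) *\<^sub>R Kidx idx) $ x $ y"
    unfolding sum_matrix_entry .
qed

lemma cidx_bound: "\<bar>Re (cidx D idx)\<bar> \<le> norm D"
proof -
  have "\<bar>Re (cidx D idx)\<bar> \<le> cmod (cidx D idx)" by (rule abs_Re_le_cmod)
  also have "\<dots> = cmod (D $ fst (fst idx) $ snd (fst idx)) / 4"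
    unfolding cidx_def by (simp add: norm_mult norm_divide gam_norm)
  also have "\<dots> \<le> norm D / 4"
    using order_trans[OF Finite_Cartesian_Product.norm_nth_le Finite_Cartesian_Product.norm_nth_le]
    by (simp add: divide_right_mono)
  also have "\<dots> \<le> norm D" by simp
  finally show ?thesis .
qed

lemma hu_quad_bound:
  fixes a a' :: "'a::finite"
  shows "cmod (quad_form (hu a a' s) v) \<le> (2 * real CARD('a) * real CARD('a)) * (norm v)^2"
proof -
  have "cmod (quad_form (hu a a' s) v) \<le> (\<Sum>i\<in>UNIV. \<Sum>j\<in>UNIV. cmod (hu a a' s $i$j)) * (norm v)^2"
    by (rule quad_form_bound)
  also have "\<dots> \<le> (\<Sum>i\<in>(UNIV::'a set). \<Sum>j\<in>(UNIV::'a set). 2) * (norm v)^2"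
    by (intro mult_right_mono sum_mono hu_bound) auto
  also have "\<dots> = (2 * real CARD('a) * real CARD('a)) * (norm v)^2" by simp
  finally show ?thesis .
qed



lemma pdl_density_scale:
  assumes "pdl P l" "l > 0"
  shows "density ((1 / Re (mtrace P)) *\<^sub>R P)"
proof -
  define a where "a = Re (mtrace P)"
  have tr: "mtrace P = of_real a" "a > 0" using pdl_trace[OF assms] unfolding a_def by auto
  have ps: "psd P" using pdl_psd[OF assms(1)] assms(2) by simp
  have h: "hermitian P" using assms(1) unfolding pdl_def by blast
  have "psd ((1/a) *\<^sub>R P)"
    unfolding psd_def
  proof (intro conjI allI)
    show "hermitian ((1/a) *\<^sub>R P)" by (rule hermitian_scaleR[OF h])
    fix v
    have q: "quad_form P v \<in> \<real>" "0 \<le> Re (quad_form P v)" using ps unfolding psd_def by auto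
    show "quad_form ((1/a) *\<^sub>R P) v \<in> \<real>" unfolding quad_form_scaleR using q by simp
    show "0 \<le> Re (quad_form ((1/a) *\<^sub>R P) v)" unfolding quad_form_scaleR using q tr by simp
  qed
  moreover have "mtrace ((1/a) *\<^sub>R P) = 1" unfolding mtrace_scaleR tr using tr by simp
  ultimately show ?thesis unfolding density_def a_def by blast
qed

lemma cone_separable:
  fixes P :: "'j \<Rightarrow> 'a::finite cmat" and Q :: "'j \<Rightarrow> 'b::finite cmat"
  assumes J: "finite J" and w: "\<And>j. j \<in> J \<Longrightarrow> w j \<ge> 0"
    and pP: "\<And>j. j \<in> J \<Longrightarrow> pdl (P j) lA" and pQ: "\<And>j. j \<in> J \<Longrightarrow> pdl (Q j) lB"
    and l: "lA > 0" "lB > 0"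
    and X: "X = (\<Sum>j\<in>J. w j *\<^sub>R kron (P j) (Q j))" and tX: "mtrace X = 1"
  shows "X \<in> separable_states"
proof -
  define a where "a j = Re (mtrace (P j))" for j
  define b where "b j = Re (mtrace (Q j))" for j
  have ta: "mtrace (P j) = of_real (a j)" "a j > 0" if "j \<in> J" for j
    using pdl_trace[OF pP[OF that] l(1)] unfolding a_def by auto
  have tb: "mtrace (Q j) = of_real (b j)" "b j > 0" if "j \<in> J" for j
    using pdl_trace[OF pQ[OF that] l(2)] unfolding b_def by auto
  define P' where "P' j = (1 / a j) *\<^sub>R P j" for j
  define Q' where "Q' j = (1 / b j) *\<^sub>R Q j" for j
  have dP: "density (P' j)" if "j \<in> J" for j
    unfolding P'_def a_def by (rule pdl_density_scale[OF pP[OF that] l(1)])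
  have dQ: "density (Q' j)" if "j \<in> J" for j
    unfolding Q'_def b_def by (rule pdl_density_scale[OF pQ[OF that] l(2)])
  have kr: "w j *\<^sub>R kron (P j) (Q j) = (w j * a j * b j) *\<^sub>R kron (P' j) (Q' j)" if "j \<in> J" for j
    using ta[OF that] tb[OF that] unfolding P'_def Q'_def
    by (simp add: kron_scaleR_left kron_scaleR_right)
  have X2: "X = (\<Sum>j\<in>J. (w j * a j * b j) *\<^sub>R kron (P' j) (Q' j))"
    unfolding X using kr by (intro sum.cong refl) auto
  have "mtrace X = (\<Sum>j\<in>J. of_real (w j * a j * b j))"
    unfolding X mtrace_sum[OF J] using ta tb
    by (intro sum.cong refl) (simp add: mtrace_scaleR mtrace_kron)
  then have s1: "(\<Sum>j\<in>J. w j * a j * b j) = 1" using tX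
    by (metis of_real_eq_1_iff of_real_sum)
  show ?thesis unfolding X2
  proof (rule convex_sum[OF J])
    show "convex (separable_states :: ('a \<times> 'b) cmat set)"
      unfolding separable_states_def by (rule convex_convex_hull)
    show "(\<Sum>j\<in>J. w j * a j * b j) = 1" by (rule s1)
    show "0 \<le> w j * a j * b j" if "j \<in> J" for j
      using w[OF that] ta(2)[OF that] tb(2)[OF that] by simp
    show "kron (P' j) (Q' j) \<in> separable_states" if "j \<in> J" for j
      unfolding separable_states_def using dP[OF that] dQ[OF that] by (intro hull_inc) blast
  qed
qed



lemma kron_pm:
  "kron (A + a *\<^sub>R h) (B + b *\<^sub>R k) + kron (A + (- a) *\<^sub>R h) (B + (- b) *\<^sub>R k)
     = 2 *\<^sub>R kron A B + (2 * a * b) *\<^sub>R kron h k"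
  unfolding vec_eq_iff
  by (simp add: kron_def scaleR_entry algebra_simps del: vector_scaleR_component)

lemma density_pdl:
  fixes M :: "'n::finite cmat"
  assumes "density M" "det M \<noteq> 0"
  shows "\<exists>l>0. pdl M l"
proof -
  have ps: "psd M" using assms(1) unfolding density_def by blast
  then have h: "hermitian M" unfolding psd_def by blast
  obtain l where "l > 0" "\<forall>v. l * (norm v)^2 \<le> Re (quad_form M v)"
    using pos_def_bound[OF ps assms(2)] by blast
  then show ?thesis unfolding pdl_def using h by blast
qed

definition sg :: "bool \<Rightarrow> real" where "sg b = (if b then 1 else -1)"

lemma full_rank_internal:
  fixes rhoA :: "'a::finite cmat" and rhoB :: "'b::finite cmat"
  assumes dA: "density rhoA" and dB: "density rhoB" and nA: "det rhoA \<noteq> 0" and nB: "det rhoB \<noteq> 0"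
  shows "internal_point (separable_states :: ('a \<times> 'b) cmat set) (kron rhoA rhoB)"
proof -
  obtain lA where lA: "lA > 0" "pdl rhoA lA" using density_pdl[OF dA nA] by blast
  obtain lB where lB: "lB > 0" "pdl rhoB lB" using density_pdl[OF dB nB] by blast
  have hA: "hermitian rhoA" using lA unfolding pdl_def by blast
  have hB: "hermitian rhoB" using lB unfolding pdl_def by blast
  define KA where "KA = 2 * real CARD('a) * real CARD('a)"
  define KB where "KB = 2 * real CARD('b) * real CARD('b)"
  have KA: "KA > 0" unfolding KA_def by simp
  have KB: "KB > 0" unfolding KB_def by simp
  define m where "m = real CARD((('a \<times> 'b) \<times> ('a \<times> 'b)) \<times> (bool \<times> bool))"
  have m: "m > 0" unfolding m_def by simp
  define al where "al = lA / (2 * KA)"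
  have al: "al > 0" unfolding al_def using lA KA by simp
  define e where "e = lB * al / (2 * KB * m)"
  have e: "e > 0" unfolding e_def using lB al KB m by simp
  show ?thesis unfolding internal_point_def
  proof (intro exI conjI)
    show "e > 0" by (rule e)
    show "ball (kron rhoA rhoB) e \<inter> trace_one_herm \<subseteq> separable_states"
    proof
      fix X :: "('a \<times> 'b) cmat"
      assume X: "X \<in> ball (kron rhoA rhoB) e \<inter> trace_one_herm"
      define rho where "rho = kron rhoA rhoB"
      define D where "D = X - rho"
      have hX: "hermitian X" and tX: "mtrace X = 1" using X unfolding trace_one_herm_def by auto
      have hrho: "hermitian rho" unfolding rho_def by (rule hermitian_kron[OF hA hB])
      have hD: "hermitian D" unfolding D_def by (rule hermitian_diff[OF hX hrho])
      have nD: "norm D < e" using X unfolding D_def rho_def by (simp add: dist_norm norm_minus_commute)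
      define r where "r idx = Re (cidx D idx)" for idx
      have r: "\<bar>r idx\<bar> < e" for idx unfolding r_def using cidx_bound[of D idx] nD by linarith
      have Ddec: "D = (\<Sum>idx\<in>UNIV. r idx *\<^sub>R Kidx idx)" unfolding r_def by (rule herm_decomp[OF hD])
      define be where "be idx = r idx * m / al" for idx
      define hh where "hh idx = hu (fst (fst (fst idx))) (fst (snd (fst idx))) (fst (snd idx))"
        for idx :: "(('a \<times> 'b) \<times> ('a \<times> 'b)) \<times> (bool \<times> bool)"
      define kk where "kk idx = hu (snd (fst (fst idx))) (snd (snd (fst idx))) (snd (snd idx))"
        for idx :: "(('a \<times> 'b) \<times> ('a \<times> 'b)) \<times> (bool \<times> bool)"
      have Kk: "Kidx idx = kron (hh idx) (kk idx)" for idx unfolding Kidx_def hh_def kk_def ..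
      define P where "P j = rhoA + (sg (snd j) * al) *\<^sub>R hh (fst j)" for j
      define Q where "Q j = rhoB + (sg (snd j) * be (fst j)) *\<^sub>R kk (fst j)" for j
      have pP: "pdl (P j) (lA/2)" for j
        unfolding P_def
      proof (rule pdl_perturb[OF lA(2)])
        show "hermitian (hh (fst j))" unfolding hh_def by (rule hu_herm)
        show "cmod (quad_form (hh (fst j)) v) \<le> KA * (norm v)^2" for v
          unfolding hh_def KA_def by (rule hu_quad_bound)
        show "\<bar>sg (snd j) * al\<bar> * KA \<le> lA / 2"
          unfolding sg_def al_def using KA lA by (simp add: abs_mult)
      qed
      have pQ: "pdl (Q j) (lB/2)" for j
        unfolding Q_def
      proof (rule pdl_perturb[OF lB(2)])
        show "hermitian (kk (fst j))" unfolding kk_def by (rule hu_herm)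
        show "cmod (quad_form (kk (fst j)) v) \<le> KB * (norm v)^2" for v
          unfolding kk_def KB_def by (rule hu_quad_bound)
        have "\<bar>sg (snd j) * be (fst j)\<bar> * KB = \<bar>r (fst j)\<bar> * (m * KB / al)"
          unfolding sg_def be_def using m al by (simp add: abs_mult)
        also have "\<dots> \<le> e * (m * KB / al)"
          using r[of "fst j"] m al KB by (intro mult_right_mono) auto
        also have "\<dots> = lB / 2" unfolding e_def using m al KB by (simp add: field_simps)
        finally show "\<bar>sg (snd j) * be (fst j)\<bar> * KB \<le> lB / 2" .
      qed
      have step: "(\<Sum>s\<in>UNIV. (1 / (2*m)) *\<^sub>R kron (P (idx, s)) (Q (idx, s)))
                  = (1/m) *\<^sub>R rho + r idx *\<^sub>R Kidx idx" for idx
      proof -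
        have "(\<Sum>s\<in>UNIV. (1 / (2*m)) *\<^sub>R kron (P (idx, s)) (Q (idx, s)))
          = (1 / (2*m)) *\<^sub>R (kron (rhoA + al *\<^sub>R hh idx) (rhoB + be idx *\<^sub>R kk idx)
              + kron (rhoA + (- al) *\<^sub>R hh idx) (rhoB + (- be idx) *\<^sub>R kk idx))"
          unfolding UNIV_bool P_def Q_def sg_def by (simp add: scaleR_add_right add.commute)
        also have "\<dots> = (1/m) *\<^sub>R rho + r idx *\<^sub>R Kidx idx"
          unfolding kron_pm Kk rho_def be_def using m al by (simp add: scaleR_add_right)
        finally show ?thesis .
      qed
      have "(\<Sum>j\<in>UNIV. (1 / (2*m)) *\<^sub>R kron (P j) (Q j))
            = (\<Sum>idx\<in>UNIV. \<Sum>s\<in>UNIV. (1 / (2*m)) *\<^sub>R kron (P (idx, s)) (Q (idx, s)))"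
        by (rule sum_UNIV_prod)
      also have "\<dots> = (\<Sum>idx\<in>UNIV. (1/m) *\<^sub>R rho + r idx *\<^sub>R Kidx idx)"
        using step by simp
      also have "\<dots> = rho + D"
        unfolding sum.distrib Ddec[symmetric] sum_constant_scaleR using m unfolding m_def by simp
      also have "\<dots> = X" unfolding D_def by simp
      finally have Xeq: "X = (\<Sum>j\<in>UNIV. (1 / (2*m)) *\<^sub>R kron (P j) (Q j))" by simp
      show "X \<in> separable_states"
        by (rule cone_separable[where J=UNIV and w="\<lambda>_. 1/(2*m)" and P=P and Q=Q and lA="lA/2" and lB="lB/2"])
           (use m lA lB pP pQ Xeq tX in auto)
    qed
  qed
qed


lemma axis_nonzero: "axis i (1::complex) \<noteq> 0"
  by (metis axis_nth one_neq_zero zero_index)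

theorem mainTheorem1:
  fixes rhoA :: "'a::finite cmat" and rhoB :: "'b::finite cmat"
  assumes "CARD('a) \<ge> 2" and "CARD('b) \<ge> 2"
    and "density rhoA" and "density rhoB"
  shows "kron rhoA rhoB \<in> aff_boundary (separable_states :: ('a \<times> 'b) cmat set)
         \<longleftrightarrow> det rhoA * det rhoB = 0"
proof -
  have inS: "kron rhoA rhoB \<in> (separable_states :: ('a \<times> 'b) cmat set)"
    unfolding separable_states_def using assms(3,4) by (intro hull_inc) blast
  have hA: "hermitian rhoA" and hB: "hermitian rhoB"
    using assms(3,4) unfolding density_def psd_def by auto
  have rt: "kron rhoA rhoB \<in> trace_one_herm"
    unfolding trace_one_herm_def using assms(3,4) hermitian_kron[OF hA hB]
    by (simp add: mtrace_kron density_def)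
  have N: "CARD('a \<times> 'b) \<ge> 2"
  proof -
    have "CARD('a \<times> 'b) = CARD('a) * CARD('b)"
      by (simp add: UNIV_Times_UNIV[symmetric] card_cartesian_product del: UNIV_Times_UNIV)
    moreover have "CARD('a) \<le> CARD('a) * CARD('b)" using assms(2) by simp
    ultimately show ?thesis using assms(1) by linarith
  qed
  have ni: "\<not> internal_point (separable_states :: ('a \<times> 'b) cmat set) (kron rhoA rhoB)"
    if "u \<noteq> 0" "quad_form (kron rhoA rhoB) u = 0" "u = pv v w" for u v w
    by (rule not_internal_aux[OF N that(1,2) rt]) (use that(3) separable_quad_nonneg in blast)
  show ?thesis
  proof
    assume "kron rhoA rhoB \<in> aff_boundary separable_states"
    then have "\<not> internal_point (separable_states :: ('a \<times> 'b) cmat set) (kron rhoA rhoB)"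
      unfolding aff_boundary_def by blast
    then show "det rhoA * det rhoB = 0" using full_rank_internal[OF assms(3,4)] by auto
  next
    assume "det rhoA * det rhoB = 0"
    then consider "det rhoA = 0" | "det rhoB = 0" by auto
    then have "\<not> internal_point (separable_states :: ('a \<times> 'b) cmat set) (kron rhoA rhoB)"
    proof cases
      case 1
      then obtain v where v: "v \<noteq> 0" "rhoA *v v = 0" using det_zero_kernel by blast
      obtain b :: 'b where True by blast
      show ?thesis
        by (rule ni[OF pv_nonzero[OF v(1) axis_nonzero[of b]] _ refl])
           (simp add: quad_form_kron_pv quad_form_ker[OF v(2)])
    next
      case 2
      then obtain w where w: "w \<noteq> 0" "rhoB *v w = 0" using det_zero_kernel by blast
      obtain a :: 'a where True by blast
      show ?thesis
        by (rule ni[OF pv_nonzero[OF axis_nonzero[of a] w(1)] _ refl])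
           (simp add: quad_form_kron_pv quad_form_ker[OF w(2)])
    qed
    then show "kron rhoA rhoB \<in> aff_boundary separable_states"
      unfolding aff_boundary_def using inS by blast
  qed
qed

end
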